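(* Let $A$ be a $2$-pole with $t(A)=(a+2,\,a,\,n)$. Let $A'$ be the $2$-pole constructed from $A$ as follows: take two disjoint copies of $A$ and four new vertices $x_1,x_2,y_1,y_2$; attach one dangling edge of each copy of $A$ to $x_1$ and the other dangling edge of each copy to $x_2$; add the edges of the path $x_1y_1y_2x_2$; finally add one dangling edge at $y_1$ and one dangling edge at $y_2$ (these two are the dangling edges of $A'$). Then $t(A')=(2a+4,\,2a+2,\,2n+4)$.
   Context: An $r$-pole ($r\in\{2,3\}$) is a finite graph together with $r$ dangling edges, each dangling edge being a half-edge attached to exactly one vertex, such that every vertex has degree $3$ when dangling edges are counted (a $2$-pole arises, e.g., from a $2$-edge-connected cubic graph by cutting one edge into two dangling edges). An even factor of an $r$-pole $P$ is a set $F$ of edges and dangling edges of $P$ such that every vertex of $P$ is incident with either $0$ or $2$ elements of $F$; the number of dangling edges in $F$ is always even. Thus $F$ decomposes into disjoint circuits, isolated vertices (vertices incident with no element of $F$), and, if $F$ contains two dangling edges, one path starting and ending with a dangling edge. The excess of $F$ is $q(P,F)=2c+v$, where $c$ is the number of circuits of $F$ and $v$ is the number of isolated vertices (the path through dangling edges contributes nothing). For an $r$-pole $P$ we set $t(P)=(q_0(P),q_2(P),n(P))$, where $q_0(P)$ is the minimum of $q(P,F)$ over all even factors $F$ containing no dangling edges, $q_2(P)$ is the minimum of $q(P,F)$ over all even factors $F$ containing two dangling edges, and $n(P)$ is the number of vertices of $P$. *)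

theory Defs
  imports Main "HOL-Library.Multiset" "HOL-Library.Extended_Nat"
begin

text \<open>An r-pole is given by a finite vertex set V, a finite edge set E and an
  endpoint map ends: an ordinary edge has a multiset of two endpoints (a loop has
  the same endpoint twice), a dangling edge has exactly one endpoint.\<close>

definition dangling :: "('e \<Rightarrow> 'v multiset) \<Rightarrow> 'e \<Rightarrow> bool" where
  "dangling ends e \<longleftrightarrow> size (ends e) = 1"

definition deg_in :: "('e \<Rightarrow> 'v multiset) \<Rightarrow> 'e set \<Rightarrow> 'v \<Rightarrow> nat" where
  "deg_in ends F v = (\<Sum>e\<in>F. count (ends e) v)"

definition is_pole :: "nat \<Rightarrow> 'v set \<Rightarrow> 'e set \<Rightarrow> ('e \<Rightarrow> 'v multiset) \<Rightarrow> bool" where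
  "is_pole r V E ends \<longleftrightarrow> finite V \<and> finite E
     \<and> (\<forall>e\<in>E. set_mset (ends e) \<subseteq> V \<and> (size (ends e) = 1 \<or> size (ends e) = 2))
     \<and> card {e\<in>E. dangling ends e} = r
     \<and> (\<forall>v\<in>V. deg_in ends E v = 3)"

definition even_factor :: "'v set \<Rightarrow> 'e set \<Rightarrow> ('e \<Rightarrow> 'v multiset) \<Rightarrow> 'e set \<Rightarrow> bool" where
  "even_factor V E ends F \<longleftrightarrow> F \<subseteq> E \<and> (\<forall>v\<in>V. deg_in ends F v = 0 \<or> deg_in ends F v = 2)"

definition fadj :: "('e \<Rightarrow> 'v multiset) \<Rightarrow> 'e set \<Rightarrow> ('v \<times> 'v) set" where
  "fadj ends F = {(u, v). \<exists>e\<in>F. \<not> dangling ends e \<and> ends e = {#u, v#}}"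

definition fcomps :: "'v set \<Rightarrow> ('e \<Rightarrow> 'v multiset) \<Rightarrow> 'e set \<Rightarrow> 'v set set" where
  "fcomps V ends F = {C. \<exists>u\<in>V. deg_in ends F u \<noteq> 0 \<and> C = {w. (u, w) \<in> (fadj ends F)\<^sup>*}}"

definition num_circuits :: "'v set \<Rightarrow> ('e \<Rightarrow> 'v multiset) \<Rightarrow> 'e set \<Rightarrow> nat" where
  "num_circuits V ends F = card {C \<in> fcomps V ends F.
      \<not> (\<exists>e\<in>F. dangling ends e \<and> set_mset (ends e) \<subseteq> C)}"

definition num_isolated :: "'v set \<Rightarrow> ('e \<Rightarrow> 'v multiset) \<Rightarrow> 'e set \<Rightarrow> nat" where
  "num_isolated V ends F = card {v\<in>V. deg_in ends F v = 0}"

definition excess :: "'v set \<Rightarrow> ('e \<Rightarrow> 'v multiset) \<Rightarrow> 'e set \<Rightarrow> nat" where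
  "excess V ends F = 2 * num_circuits V ends F + num_isolated V ends F"

text \<open>Minima are taken in enat, so that the minimum over an empty set is \<infinity>.\<close>
definition q0 :: "'v set \<Rightarrow> 'e set \<Rightarrow> ('e \<Rightarrow> 'v multiset) \<Rightarrow> enat" where
  "q0 V E ends = (INF F \<in> {F. even_factor V E ends F \<and> (\<forall>e\<in>F. \<not> dangling ends e)}.
                    enat (excess V ends F))"

definition q2 :: "'v set \<Rightarrow> 'e set \<Rightarrow> ('e \<Rightarrow> 'v multiset) \<Rightarrow> enat" where
  "q2 V E ends = (INF F \<in> {F. even_factor V E ends F \<and> card {e\<in>F. dangling ends e} = 2}.
                    enat (excess V ends F))"

definition tpole :: "'v set \<Rightarrow> 'e set \<Rightarrow> ('e \<Rightarrow> 'v multiset) \<Rightarrow> enat \<times> enat \<times> nat" where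
  "tpole V E ends = (q0 V E ends, q2 V E ends, card V)"

datatype 'v dv = CV bool 'v | X1 | X2 | Y1 | Y2
datatype 'e de = CE bool 'e | EX1Y1 | EY1Y2 | EY2X2 | DY1 | DY2

definition dbl_V :: "'v set \<Rightarrow> 'v dv set" where
  "dbl_V V = {CV b v | b v. v \<in> V} \<union> {X1, X2, Y1, Y2}"

definition dbl_E :: "'e set \<Rightarrow> 'e de set" where
  "dbl_E E = {CE b e | b e. e \<in> E} \<union> {EX1Y1, EY1Y2, EY2X2, DY1, DY2}"

fun dbl_ends :: "('e \<Rightarrow> 'v multiset) \<Rightarrow> 'e \<Rightarrow> 'e \<Rightarrow> 'e de \<Rightarrow> 'v dv multiset" where
  "dbl_ends ends d1 d2 (CE b e) =
     (if e = d1 then image_mset (CV b) (ends e) + {#X1#}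
      else if e = d2 then image_mset (CV b) (ends e) + {#X2#}
      else image_mset (CV b) (ends e))"
| "dbl_ends ends d1 d2 EX1Y1 = {#X1, Y1#}"
| "dbl_ends ends d1 d2 EY1Y2 = {#Y1, Y2#}"
| "dbl_ends ends d1 d2 EY2X2 = {#Y2, X2#}"
| "dbl_ends ends d1 d2 DY1 = {#Y1#}"
| "dbl_ends ends d1 d2 DY2 = {#Y2#}"

end

theory Submission
  imports Defs
begin

locale dbl =
  fixes V :: "'v set" and E :: "'e set" and ends :: "'e \<Rightarrow> 'v multiset" and d1 d2 :: 'e
  assumes pole: "is_pole 2 V E ends"
    and d1E: "d1 \<in> E" and d2E: "d2 \<in> E" and d12: "d1 \<noteq> d2"
    and dd1: "dangling ends d1" and dd2: "dangling ends d2"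
begin

abbreviation "en \<equiv> dbl_ends ends d1 d2"
abbreviation "V' \<equiv> dbl_V V"
abbreviation "E' \<equiv> dbl_E E"

lemma finV: "finite V" and finE: "finite E" and endsV: "e\<in>E \<Longrightarrow> set_mset (ends e) \<subseteq> V"
  and size12: "e \<in> E \<Longrightarrow> size (ends e) = 1 \<or> size (ends e) = 2"
  and cardD: "card {e\<in>E. dangling ends e} = 2"
  using pole unfolding is_pole_def by auto

lemma dangE: "{e\<in>E. dangling ends e} = {d1,d2}"
proof -
  have "{d1,d2} \<subseteq> {e\<in>E. dangling ends e}" using d1E d2E dd1 dd2 by auto
  moreover have "finite {e\<in>E. dangling ends e}" using finE by auto
  moreover have "card {d1,d2} = 2" using d12 by auto
  ultimately show ?thesis using cardD by (metis card_subset_eq)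
qed

lemma nd_size2: "e \<in> E \<Longrightarrow> e \<noteq> d1 \<Longrightarrow> e \<noteq> d2 \<Longrightarrow> size (ends e) = 2"
  using size12 dangE unfolding dangling_def by blast

definition z1 where "z1 = (SOME z. ends d1 = {#z#})"
definition z2 where "z2 = (SOME z. ends d2 = {#z#})"

lemma ends_d1: "ends d1 = {#z1#}"
proof -
  have "\<exists>z. ends d1 = {#z#}" using dd1 size_1_singleton_mset unfolding dangling_def by blast
  then show ?thesis unfolding z1_def by (rule someI_ex)
qed

lemma ends_d2: "ends d2 = {#z2#}"
proof -
  have "\<exists>z. ends d2 = {#z#}" using dd2 size_1_singleton_mset unfolding dangling_def by blast
  then show ?thesis unfolding z2_def by (rule someI_ex)
qed

lemma z1V: "z1 \<in> V" using endsV[OF d1E] ends_d1 by auto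
lemma z2V: "z2 \<in> V" using endsV[OF d2E] ends_d2 by auto

lemma handshake:
  assumes "F \<subseteq> E"
  shows "(\<Sum>v\<in>V. deg_in ends F v) = (\<Sum>e\<in>F. size (ends e))"
proof -
  have fF: "finite F" using assms finE finite_subset by blast
  have "(\<Sum>v\<in>V. deg_in ends F v) = (\<Sum>e\<in>F. \<Sum>v\<in>V. count (ends e) v)"
    unfolding deg_in_def by (rule sum.swap)
  also have "\<dots> = (\<Sum>e\<in>F. size (ends e))"
  proof (rule sum.cong[OF refl])
    fix e assume "e \<in> F"
    then have sub: "set_mset (ends e) \<subseteq> V" using assms endsV by blast
    have "(\<Sum>v\<in>V. count (ends e) v) = (\<Sum>v\<in>set_mset (ends e). count (ends e) v)"
      by (rule sum.mono_neutral_right[OF finV sub]) (auto simp: count_eq_zero_iff)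
    then show "(\<Sum>v\<in>V. count (ends e) v) = size (ends e)"
      by (simp add: size_multiset_overloaded_eq)
  qed
  finally show ?thesis .
qed

lemma parity:
  assumes "even_factor V E ends F"
  shows "even (card {e\<in>F. dangling ends e})"
proof -
  have FE: "F \<subseteq> E" using assms unfolding even_factor_def by auto
  have fF: "finite F" using FE finE finite_subset by blast
  have "even (\<Sum>v\<in>V. deg_in ends F v)"
    using assms unfolding even_factor_def by (auto intro!: dvd_sum)
  moreover have "(\<Sum>e\<in>F. size (ends e)) = (\<Sum>e\<in>F. if dangling ends e then 1 else 2)"
    apply (rule sum.cong[OF refl])
    using FE size12 unfolding dangling_def by force
  moreover have "(\<Sum>e\<in>F. if dangling ends e then 1 else 2::nat)
      = card {e\<in>F. dangling ends e} + 2 * card (F \<inter> - {e. dangling ends e})"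
    using fF by (simp add: sum.If_cases Int_def conj_commute)
  ultimately show ?thesis using handshake[OF FE] by simp
qed

lemma dang_sub: "F \<subseteq> E \<Longrightarrow> {e\<in>F. dangling ends e} = F \<inter> {d1,d2}"
  using dangE by blast

lemma par_d: assumes "even_factor V E ends F" shows "d1 \<in> F \<longleftrightarrow> d2 \<in> F"
proof -
  have FE: "F \<subseteq> E" using assms unfolding even_factor_def by auto
  have "even (card (F \<inter> {d1,d2}))" using parity[OF assms] dang_sub[OF FE] by simp
  then show ?thesis using d12
    by (cases "d1 \<in> F"; cases "d2 \<in> F") (auto simp: Int_insert_right)
qed

end

lemma cnt_img_CV: "count (image_mset (CV b) M) (CV c w) = (if b = c then count M w else 0)"
  by (induction M) auto
lemma cnt_img_X1: "count (image_mset (CV b) M) X1 = 0" by (induction M) auto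
lemma cnt_img_X2: "count (image_mset (CV b) M) X2 = 0" by (induction M) auto
lemma cnt_img_Y1: "count (image_mset (CV b) M) Y1 = 0" by (induction M) auto
lemma cnt_img_Y2: "count (image_mset (CV b) M) Y2 = 0" by (induction M) auto

definition Fb :: "'e de set \<Rightarrow> bool \<Rightarrow> 'e set" where "Fb F b = {e. CE b e \<in> F}"

definition SP :: "'e de set" where "SP = {EX1Y1, EY1Y2, EY2X2, DY1, DY2}"

lemma finSP: "finite SP" by (simp add: SP_def)

lemma decomp: "F = CE True ` Fb F True \<union> CE False ` Fb F False \<union> (SP \<inter> F)"
  unfolding Fb_def SP_def
proof (intro set_eqI iffI)
  fix x assume "x \<in> F" then show "x \<in> CE True ` {e. CE True e \<in> F} \<union> CE False ` {e. CE False e \<in> F} \<union>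
         ({EX1Y1, EY1Y2, EY2X2, DY1, DY2} \<inter> F)"
  proof (cases x)
    case (CE b e) then show ?thesis using \<open>x \<in> F\<close> by (cases b) auto
  qed (use \<open>x \<in> F\<close> in auto)
qed auto

context dbl begin

lemma CE_in_E'[simp]: "CE b e \<in> E' \<longleftrightarrow> e \<in> E" by (auto simp: dbl_E_def)
lemma sp_in_E'[simp]: "EX1Y1 \<in> E'" "EY1Y2 \<in> E'" "EY2X2 \<in> E'" "DY1 \<in> E'" "DY2 \<in> E'"
  by (auto simp: dbl_E_def)
lemma CV_in_V'[simp]: "CV b v \<in> V' \<longleftrightarrow> v \<in> V" by (auto simp: dbl_V_def)
lemma sp_in_V'[simp]: "X1 \<in> V'" "X2 \<in> V'" "Y1 \<in> V'" "Y2 \<in> V'"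
  by (auto simp: dbl_V_def)

lemma finE': "finite E'"
proof -
  have "E' = (\<lambda>(b,e). CE b e) ` (UNIV \<times> E) \<union> {EX1Y1, EY1Y2, EY2X2, DY1, DY2}"
    by (auto simp: dbl_E_def)
  then show ?thesis using finE by simp
qed

lemma V'_eq: "V' = CV True ` V \<union> CV False ` V \<union> {X1,X2,Y1,Y2}"
  by (auto simp: dbl_V_def)

lemma card_V': "card V' = 2 * card V + 4"
proof -
  have "card (CV True ` V \<union> CV False ` V \<union> {X1,X2,Y1,Y2}) = card (CV True ` V \<union> CV False ` V) + card {X1,X2,Y1,Y2::'v dv}"
    by (rule card_Un_disjoint) (use finV in auto)
  also have "card (CV True ` V \<union> CV False ` V) = card (CV True ` V) + card (CV False ` V)"
    by (rule card_Un_disjoint) (use finV in auto)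
  also have "card (CV True ` V) = card V" by (rule card_image) (auto simp: inj_on_def)
  also have "card (CV False ` V) = card V" by (rule card_image) (auto simp: inj_on_def)
  finally show ?thesis by (simp add: V'_eq)
qed

lemma en_CE: "e \<noteq> d1 \<Longrightarrow> e \<noteq> d2 \<Longrightarrow> en (CE b e) = image_mset (CV b) (ends e)" by simp
lemma en_d1: "en (CE b d1) = {#CV b z1, X1#}" by (simp add: ends_d1)
lemma en_d2: "en (CE b d2) = {#CV b z2, X2#}" using d12 by (simp add: ends_d2)

lemma cnt_CE_CV: "count (en (CE b e)) (CV c w) = (if b = c then count (ends e) w else 0)"
  by (simp add: cnt_img_CV)
lemma cnt_CE_X1: "count (en (CE b e)) X1 = (if e = d1 then 1 else 0)"
  using d12 by (simp add: cnt_img_X1)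
lemma cnt_CE_X2: "count (en (CE b e)) X2 = (if e = d2 then 1 else 0)"
  using d12 by (simp add: cnt_img_X2)
lemma cnt_CE_Y1: "count (en (CE b e)) Y1 = 0"
  by (simp add: cnt_img_Y1)
lemma cnt_CE_Y2: "count (en (CE b e)) Y2 = 0"
  by (simp add: cnt_img_Y2)

lemma Fb_sub: "F \<subseteq> E' \<Longrightarrow> Fb F b \<subseteq> E" unfolding Fb_def by auto
lemma finFb: "F \<subseteq> E' \<Longrightarrow> finite (Fb F b)" by (rule finite_subset[OF Fb_sub finE])

lemma deg_split:
  assumes "F \<subseteq> E'"
  shows "deg_in en F v = (\<Sum>e\<in>Fb F True. count (en (CE True e)) v) + (\<Sum>e\<in>Fb F False. count (en (CE False e)) v)
      + (\<Sum>e\<in>SP. if e \<in> F then count (en e) v else 0)"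
proof -
  have fT: "finite (Fb F True)" "finite (Fb F False)" using Fb_sub[OF assms] finE finite_subset by blast+
  have "deg_in en F v = deg_in en (CE True ` Fb F True \<union> CE False ` Fb F False \<union> (SP \<inter> F)) v"
    by (subst decomp[of F]) simp
  also have "\<dots> = deg_in en (CE True ` Fb F True) v + deg_in en (CE False ` Fb F False) v + deg_in en (SP \<inter> F) v"
    unfolding deg_in_def
    by (subst sum.union_disjoint, use fT finSP in \<open>auto simp: SP_def\<close>)+
  also have "deg_in en (CE True ` Fb F True) v = (\<Sum>e\<in>Fb F True. count (en (CE True e)) v)"
    unfolding deg_in_def by (subst sum.reindex) (auto simp: inj_on_def)
  also have "deg_in en (CE False ` Fb F False) v = (\<Sum>e\<in>Fb F False. count (en (CE False e)) v)"
    unfolding deg_in_def by (subst sum.reindex) (auto simp: inj_on_def)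
  also have "deg_in en (SP \<inter> F) v = (\<Sum>e\<in>SP. if e \<in> F then count (en e) v else 0)"
    unfolding deg_in_def by (rule sum.inter_restrict[OF finSP])
  finally show ?thesis .
qed

lemma deg_CV:
  assumes "F \<subseteq> E'"
  shows "deg_in en F (CV b w) = deg_in ends (Fb F b) w"
  using deg_split[OF assms, of "CV b w"] unfolding cnt_CE_CV deg_in_def
  by (cases b) (simp_all add: SP_def)

lemma deg_X1:
  assumes "F \<subseteq> E'"
  shows "deg_in en F X1 = of_bool (d1 \<in> Fb F True) + of_bool (d1 \<in> Fb F False) + of_bool (EX1Y1 \<in> F)"
  using deg_split[OF assms, of X1] unfolding cnt_CE_X1
  by (simp add: SP_def sum.delta[OF finFb[OF assms]])

lemma deg_X2:
  assumes "F \<subseteq> E'"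
  shows "deg_in en F X2 = of_bool (d2 \<in> Fb F True) + of_bool (d2 \<in> Fb F False) + of_bool (EY2X2 \<in> F)"
  using deg_split[OF assms, of X2] unfolding cnt_CE_X2
  by (simp add: SP_def sum.delta[OF finFb[OF assms]])

lemma deg_Y1:
  assumes "F \<subseteq> E'"
  shows "deg_in en F Y1 = of_bool (EX1Y1 \<in> F) + of_bool (EY1Y2 \<in> F) + of_bool (DY1 \<in> F)"
  using deg_split[OF assms, of Y1] unfolding cnt_CE_Y1
  by (simp add: SP_def)

lemma deg_Y2:
  assumes "F \<subseteq> E'"
  shows "deg_in en F Y2 = of_bool (EY1Y2 \<in> F) + of_bool (EY2X2 \<in> F) + of_bool (DY2 \<in> F)"
  using deg_split[OF assms, of Y2] unfolding cnt_CE_Y2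
  by (simp add: SP_def)
end

definition circs :: "'v set \<Rightarrow> ('e \<Rightarrow> 'v multiset) \<Rightarrow> 'e set \<Rightarrow> 'v set set" where
  "circs V ends F = {C \<in> fcomps V ends F. \<not> (\<exists>e\<in>F. dangling ends e \<and> set_mset (ends e) \<subseteq> C)}"

lemma num_circuits_eq: "num_circuits V ends F = card (circs V ends F)"
  unfolding num_circuits_def circs_def ..

lemma fcomps_fin: "finite V \<Longrightarrow> finite (fcomps V ends F)"
proof -
  assume "finite V"
  moreover have "fcomps V ends F \<subseteq> (\<lambda>u. {w. (u, w) \<in> (fadj ends F)\<^sup>*}) ` V"
    unfolding fcomps_def by auto
  ultimately show ?thesis using finite_subset by blast
qed

lemma circs_fin: "finite V \<Longrightarrow> finite (circs V ends F)"
  by (rule finite_subset[OF _ fcomps_fin]) (auto simp: circs_def)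

lemma fadj_sym: "(u, v) \<in> fadj ends F \<Longrightarrow> (v, u) \<in> fadj ends F"
  unfolding fadj_def by (auto simp: add_mset_commute)

lemma rt_sym: "(u, v) \<in> (fadj ends F)\<^sup>* \<Longrightarrow> (v, u) \<in> (fadj ends F)\<^sup>*"
proof (induction rule: rtrancl_induct)
  case base then show ?case by simp
next
  case (step y z) then show ?case using fadj_sym by (meson converse_rtrancl_into_rtrancl)
qed

lemma circs_nonempty: "C \<in> circs V ends F \<Longrightarrow> C \<noteq> {}"
  unfolding circs_def fcomps_def by auto

lemma fcomps_closed: "C \<in> fcomps V ends F \<Longrightarrow> x \<in> C \<Longrightarrow> (x, y) \<in> (fadj ends F)\<^sup>* \<Longrightarrow> y \<in> C"
  unfolding fcomps_def by auto

context dbl begin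

lemma dang_E': "e \<in> E' \<Longrightarrow> dangling en e \<longleftrightarrow> e = DY1 \<or> e = DY2"
proof -
  assume e: "e \<in> E'"
  show ?thesis
  proof (cases e)
    case (CE b x)
    then have xE: "x \<in> E" using e by simp
    show ?thesis
    proof (cases "x = d1 \<or> x = d2")
      case True then show ?thesis using CE en_d1 en_d2 unfolding dangling_def by auto
    next
      case False then show ?thesis using CE en_CE nd_size2[OF xE] unfolding dangling_def by auto
    qed
  qed (auto simp: dangling_def)
qed

lemma dang_F': "F \<subseteq> E' \<Longrightarrow> {e\<in>F. dangling en e} = F \<inter> {DY1, DY2}"
  using dang_E' by auto

lemma ef_Fb: assumes "even_factor V' E' en F" shows "even_factor V E ends (Fb F b)"
proof -
  have FE: "F \<subseteq> E'" using assms unfolding even_factor_def by auto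
  show ?thesis unfolding even_factor_def
  proof (intro conjI ballI)
    show "Fb F b \<subseteq> E" by (rule Fb_sub[OF FE])
    fix v assume "v \<in> V"
    then have "CV b v \<in> V'" by simp
    then show "deg_in ends (Fb F b) v = 0 \<or> deg_in ends (Fb F b) v = 2"
      using assms deg_CV[OF FE] unfolding even_factor_def by metis
  qed
qed

lemma iso_split:
  assumes FE: "F \<subseteq> E'"
  shows "num_isolated V' en F = num_isolated V ends (Fb F True) + num_isolated V ends (Fb F False)
          + card {s\<in>{X1,X2,Y1,Y2}. deg_in en F s = 0}"
proof -
  let ?A = "{v\<in>V. deg_in ends (Fb F True) v = 0}"
  let ?B = "{v\<in>V. deg_in ends (Fb F False) v = 0}"
  let ?S = "{s\<in>{X1,X2,Y1,Y2}. deg_in en F s = 0}"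
  have eq: "{v\<in>V'. deg_in en F v = 0} = CV True ` ?A \<union> CV False ` ?B \<union> ?S"
    unfolding V'_eq using deg_CV[OF FE] by auto
  have fA: "finite ?A" "finite ?B" using finV by auto
  have "card (CV True ` ?A \<union> CV False ` ?B \<union> ?S) = card (CV True ` ?A \<union> CV False ` ?B) + card ?S"
    by (rule card_Un_disjoint) (use fA in auto)
  also have "card (CV True ` ?A \<union> CV False ` ?B) = card (CV True ` ?A) + card (CV False ` ?B)"
    by (rule card_Un_disjoint) (use fA in auto)
  also have "card (CV True ` ?A) = card ?A" by (rule card_image) (auto simp: inj_on_def)
  also have "card (CV False ` ?B) = card ?B" by (rule card_image) (auto simp: inj_on_def)
  finally show ?thesis unfolding num_isolated_def eq by simp
qed

lemma lift1:
  assumes FE: "F \<subseteq> E'" and "(u, w) \<in> fadj ends (Fb F b)"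
  shows "(CV b u, CV b w) \<in> fadj en F"
proof -
  obtain e where e: "e \<in> Fb F b" "\<not> dangling ends e" "ends e = {#u, w#}"
    using assms(2) unfolding fadj_def by auto
  have "e \<noteq> d1" "e \<noteq> d2" using e(2) dd1 dd2 by auto
  then have "en (CE b e) = {#CV b u, CV b w#}" using e(3) by simp
  moreover have "\<not> dangling en (CE b e)" using calculation unfolding dangling_def by simp
  moreover have "CE b e \<in> F" using e(1) unfolding Fb_def by simp
  ultimately show ?thesis unfolding fadj_def by blast
qed

lemma lift:
  assumes FE: "F \<subseteq> E'" and "(u, w) \<in> (fadj ends (Fb F b))\<^sup>*"
  shows "(CV b u, CV b w) \<in> (fadj en F)\<^sup>*"
  using assms(2)
proof (induction rule: rtrancl_induct)
  case base then show ?case by simp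
next
  case (step y z) then show ?case using lift1[OF FE] by (meson rtrancl_into_rtrancl)
qed

lemma step_CV:
  assumes FE: "F \<subseteq> E'" and "(CV b p, z) \<in> fadj en F"
  shows "(\<exists>q. z = CV b q \<and> (p, q) \<in> fadj ends (Fb F b)) \<or> (p = z1 \<and> d1 \<in> Fb F b \<and> z = X1)
          \<or> (p = z2 \<and> d2 \<in> Fb F b \<and> z = X2)"
proof -
  obtain e' where e': "e' \<in> F" "\<not> dangling en e'" "en e' = {#CV b p, z#}"
    using assms(2) unfolding fadj_def by auto
  have e'E: "e' \<in> E'" using e'(1) FE by auto
  have inn: "CV b p \<in># en e'" using e'(3) by simp
  show ?thesis
  proof (cases e')
    case (CE c e)
    from inn have "0 < count (en (CE c e)) (CV b p)" using CE by (simp only: count_greater_zero_iff)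
    then have cb: "c = b" unfolding cnt_CE_CV by (auto split: if_splits)
    have eF: "e \<in> Fb F b" using e'(1) CE cb unfolding Fb_def by simp
    have eE: "e \<in> E" using e'E CE by simp
    show ?thesis
    proof (cases "e = d1")
      case True
      have "{#CV b z1, X1#} = {#CV b p, z#}" using e'(3)[unfolded CE cb True en_d1] .
      then have "p = z1 \<and> z = X1" by (metis add_mset_eq_single add_mset_remove_trivial
            diff_union_swap dv.distinct(1) dv.inject insert_noteq_member)
      then show ?thesis using eF True by simp
    next
      case False
      show ?thesis
      proof (cases "e = d2")
        case True
        have "{#CV b z2, X2#} = {#CV b p, z#}" using e'(3)[unfolded CE cb True en_d2] .
        then have "p = z2 \<and> z = X2" by (metis add_mset_eq_single add_mset_remove_trivial
            diff_union_swap dv.distinct dv.inject insert_noteq_member)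
        then show ?thesis using eF True by simp
      next
        case False2: False
        then have im: "image_mset (CV b) (ends e) = add_mset (CV b p) {#z#}"
          using e'(3) CE cb False by simp
        from msed_map_invR[OF im] obtain M1 a1 where
          m1: "ends e = add_mset a1 M1" "CV b a1 = CV b p" "image_mset (CV b) M1 = {#z#}" by blast
        from msed_map_invR[of "CV b" M1 z "{#}"] m1(3) obtain M2 q where
          m2: "M1 = add_mset q M2" "CV b q = z" "image_mset (CV b) M2 = {#}" by auto
        have "ends e = {#p, q#}" using m1 m2 by simp
        moreover have "\<not> dangling ends e" using calculation unfolding dangling_def by simp
        ultimately have "(p, q) \<in> fadj ends (Fb F b)" using eF unfolding fadj_def by blast
        then show ?thesis using m2(2) by blast
      qed
    qed
  qed (use inn in auto)
qed

end

context dbl begin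

lemma comp_img:
  assumes FE: "F \<subseteq> E'" and C: "C = {w. (u, w) \<in> (fadj ends (Fb F b))\<^sup>*}"
    and nd: "\<not> (\<exists>e\<in>Fb F b. dangling ends e \<and> set_mset (ends e) \<subseteq> C)"
  shows "{w'. (CV b u, w') \<in> (fadj en F)\<^sup>*} = CV b ` C"
proof
  show "CV b ` C \<subseteq> {w'. (CV b u, w') \<in> (fadj en F)\<^sup>*}" using lift[OF FE] C by auto
next
  show "{w'. (CV b u, w') \<in> (fadj en F)\<^sup>*} \<subseteq> CV b ` C"
  proof
    fix w' assume "w' \<in> {w'. (CV b u, w') \<in> (fadj en F)\<^sup>*}"
    then have "(CV b u, w') \<in> (fadj en F)\<^sup>*" by simp
    then show "w' \<in> CV b ` C"
    proof (induction rule: rtrancl_induct)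
      case base then show ?case using C by auto
    next
      case (step y z)
      then obtain p where p: "y = CV b p" "p \<in> C" by auto
      have pC: "(u, p) \<in> (fadj ends (Fb F b))\<^sup>*" using p(2) C by simp
      from step_CV[OF FE step(2)[unfolded p(1)]] show ?case
      proof (elim disjE exE conjE)
        fix q assume "z = CV b q" "(p, q) \<in> fadj ends (Fb F b)"
        then show ?thesis using pC C by (auto intro: rtrancl_into_rtrancl)
      next
        assume "p = z1" "d1 \<in> Fb F b"
        then show ?thesis using nd dd1 ends_d1 p(2) by auto
      next
        assume "p = z2" "d2 \<in> Fb F b"
        then show ?thesis using nd dd2 ends_d2 p(2) by auto
      qed
    qed
  qed
qed

lemma circ_img:
  assumes FE: "F \<subseteq> E'" and C: "C \<in> circs V ends (Fb F b)"
  shows "CV b ` C \<in> circs V' en F"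
proof -
  obtain u where u: "u \<in> V" "deg_in ends (Fb F b) u \<noteq> 0" "C = {w. (u, w) \<in> (fadj ends (Fb F b))\<^sup>*}"
    using C unfolding circs_def fcomps_def by auto
  have nd: "\<not> (\<exists>e\<in>Fb F b. dangling ends e \<and> set_mset (ends e) \<subseteq> C)"
    using C unfolding circs_def by auto
  have eq: "CV b ` C = {w'. (CV b u, w') \<in> (fadj en F)\<^sup>*}" using comp_img[OF FE u(3) nd] by simp
  have "CV b ` C \<in> fcomps V' en F"
    unfolding fcomps_def using u(1,2) eq deg_CV[OF FE] by (intro CollectI bexI[of _ "CV b u"]) auto
  moreover have "\<not> (\<exists>e\<in>F. dangling en e \<and> set_mset (en e) \<subseteq> CV b ` C)"
  proof
    assume "\<exists>e\<in>F. dangling en e \<and> set_mset (en e) \<subseteq> CV b ` C"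
    then obtain e where "e \<in> F" "dangling en e" "set_mset (en e) \<subseteq> CV b ` C" by blast
    moreover have "e \<in> E'" using calculation(1) FE by auto
    ultimately show False using dang_E' by auto
  qed
  ultimately show ?thesis unfolding circs_def by simp
qed

lemma not_img:
  assumes FE: "F \<subseteq> E'" and C': "C' \<in> circs V' en F"
  shows "C' \<in> image (CV True) ` circs V ends (Fb F True) \<union> image (CV False) ` circs V ends (Fb F False)
        \<or> X1 \<in> C' \<or> X2 \<in> C' \<or> Y1 \<in> C' \<or> Y2 \<in> C'"
proof -
  obtain u0 where u0: "u0 \<in> V'" "deg_in en F u0 \<noteq> 0" "C' = {w. (u0, w) \<in> (fadj en F)\<^sup>*}"
    using C' unfolding circs_def fcomps_def by auto
  have u0C: "u0 \<in> C'" using u0(3) by simp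
  show ?thesis
  proof (cases u0)
    case (CV b w)
    have wV: "w \<in> V" using u0(1) CV by simp
    have dw: "deg_in ends (Fb F b) w \<noteq> 0" using u0(2) CV deg_CV[OF FE] by simp
    define C where "C = {x. (w, x) \<in> (fadj ends (Fb F b))\<^sup>*}"
    show ?thesis
    proof (cases "\<exists>e\<in>Fb F b. dangling ends e \<and> set_mset (ends e) \<subseteq> C")
      case False
      have "C \<in> circs V ends (Fb F b)" unfolding circs_def fcomps_def using wV dw False C_def by auto
      moreover have "C' = CV b ` C" using comp_img[OF FE C_def False] u0(3) CV by simp
      ultimately show ?thesis by (cases b) auto
    next
      case True
      then obtain e where e: "e \<in> Fb F b" "dangling ends e" "set_mset (ends e) \<subseteq> C" by blast
      have "e \<in> E" using e(1) Fb_sub[OF FE] by auto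
      then have "e = d1 \<or> e = d2" using dangE e(2) by auto
      then show ?thesis
      proof
        assume ed: "e = d1"
        then have "(w, z1) \<in> (fadj ends (Fb F b))\<^sup>*" using e(3) ends_d1 C_def by auto
        then have "(u0, CV b z1) \<in> (fadj en F)\<^sup>*" using lift[OF FE] CV by simp
        moreover have "(CV b z1, X1) \<in> fadj en F"
          unfolding fadj_def dangling_def using e(1) ed en_d1 unfolding Fb_def by force
        ultimately have "X1 \<in> C'" using u0(3) by (auto intro: rtrancl_into_rtrancl)
        then show ?thesis by simp
      next
        assume ed: "e = d2"
        then have "(w, z2) \<in> (fadj ends (Fb F b))\<^sup>*" using e(3) ends_d2 C_def by auto
        then have "(u0, CV b z2) \<in> (fadj en F)\<^sup>*" using lift[OF FE] CV by simp
        moreover have "(CV b z2, X2) \<in> fadj en F"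
          unfolding fadj_def dangling_def using e(1) ed en_d2 unfolding Fb_def by force
        ultimately have "X2 \<in> C'" using u0(3) by (auto intro: rtrancl_into_rtrancl)
        then show ?thesis by simp
      qed
    qed
  qed (use u0C in auto)
qed

lemma finV': "finite V'" using card_V' finV by (metis add_eq_0_iff_both_eq_0 card_eq_0_iff zero_neq_numeral)

lemma img_ne: "X \<noteq> {} \<Longrightarrow> CV True ` X \<noteq> CV False ` Y"
proof
  assume "X \<noteq> {}" "CV True ` X = CV False ` Y"
  then obtain x where "x \<in> X" by blast
  then have "CV True x \<in> CV False ` Y" using \<open>CV True ` X = CV False ` Y\<close> by (metis imageI)
  then show False by auto
qed

abbreviation "II F \<equiv> image (CV True) ` circs V ends (Fb F True) \<union> image (CV False) ` circs V ends (Fb F False)"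

lemma card_II: "card (II F) = num_circuits V ends (Fb F True) + num_circuits V ends (Fb F False)"
proof -
  have inj: "inj_on (image (CV b)) X" for b :: bool and X :: "'v set set"
    by (rule inj_onI) (simp add: inj_image_eq_iff inj_def)
  have "card (II F) = card (image (CV True) ` circs V ends (Fb F True)) + card (image (CV False) ` circs V ends (Fb F False))"
  proof (rule card_Un_disjoint)
    show "image (CV True) ` circs V ends (Fb F True) \<inter> image (CV False) ` circs V ends (Fb F False) = {}"
    proof (rule equals0I)
      fix C assume "C \<in> image (CV True) ` circs V ends (Fb F True) \<inter> image (CV False) ` circs V ends (Fb F False)"
      then obtain X Y where XY: "X \<in> circs V ends (Fb F True)" "Y \<in> circs V ends (Fb F False)"
        "C = CV True ` X" "C = CV False ` Y" by blast
      show False using img_ne[OF circs_nonempty[OF XY(1)], of Y] XY(3,4) by simp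
    qed
  qed (use circs_fin[OF finV] in auto)
  also have "\<dots> = card (circs V ends (Fb F True)) + card (circs V ends (Fb F False))"
    using card_image[OF inj] by simp
  finally show ?thesis by (simp add: num_circuits_eq)
qed

lemma II_sub: "F \<subseteq> E' \<Longrightarrow> II F \<subseteq> circs V' en F"
  using circ_img by blast

lemma II_nsp: "C \<in> II F \<Longrightarrow> X1 \<notin> C \<and> X2 \<notin> C \<and> Y1 \<notin> C \<and> Y2 \<notin> C"
  by auto

lemma circ_ge: "F \<subseteq> E' \<Longrightarrow> num_circuits V ends (Fb F True) + num_circuits V ends (Fb F False) \<le> num_circuits V' en F"
  unfolding card_II[symmetric] num_circuits_eq[of V' en F]
  by (rule card_mono[OF circs_fin[OF finV'] II_sub])


lemma circ_ge1:
  assumes FE: "F \<subseteq> E'" and K: "K \<in> circs V' en F" and s: "X1 \<in> K \<or> X2 \<in> K \<or> Y1 \<in> K \<or> Y2 \<in> K"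
  shows "num_circuits V ends (Fb F True) + num_circuits V ends (Fb F False) + 1 \<le> num_circuits V' en F"
proof -
  have "K \<notin> II F" using s II_nsp by blast
  then have "card (insert K (II F)) = card (II F) + 1"
    using card_insert_disjoint[OF finite_subset[OF II_sub[OF FE] circs_fin[OF finV']]] by simp
  moreover have "card (insert K (II F)) \<le> card (circs V' en F)"
    using K II_sub[OF FE] circs_fin[OF finV'] by (intro card_mono) auto
  ultimately show ?thesis by (simp add: card_II num_circuits_eq)
qed

lemma circ_le0:
  assumes FE: "F \<subseteq> E'" and ns: "\<And>C'. C' \<in> circs V' en F \<Longrightarrow> X1 \<notin> C' \<and> X2 \<notin> C' \<and> Y1 \<notin> C' \<and> Y2 \<notin> C'"
  shows "num_circuits V' en F \<le> num_circuits V ends (Fb F True) + num_circuits V ends (Fb F False)"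
proof -
  have "circs V' en F \<subseteq> II F" using not_img[OF FE] ns by blast
  then have "card (circs V' en F) \<le> card (II F)"
    by (rule card_mono[rotated]) (use circs_fin[OF finV] in auto)
  then show ?thesis by (simp add: card_II num_circuits_eq)
qed

lemma circ_le1:
  assumes FE: "F \<subseteq> E'" and ns: "\<And>C'. C' \<in> circs V' en F \<Longrightarrow> X1 \<in> C' \<or> X2 \<in> C' \<or> Y1 \<in> C' \<or> Y2 \<in> C' \<Longrightarrow> C' = K"
  shows "num_circuits V' en F \<le> num_circuits V ends (Fb F True) + num_circuits V ends (Fb F False) + 1"
proof -
  have "circs V' en F \<subseteq> insert K (II F)" using not_img[OF FE] ns by blast
  then have "card (circs V' en F) \<le> card (insert K (II F))"
    by (rule card_mono[rotated]) (use circs_fin[OF finV] in auto)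
  also have "\<dots> \<le> card (II F) + 1"
  proof -
    have "finite (II F)" using circs_fin[OF finV] by (intro finite_UnI finite_imageI)
    then show ?thesis by (simp add: card_insert_if)
  qed
  finally show ?thesis by (simp add: card_II num_circuits_eq)
qed

end

lemma inf_enat_attain:
  assumes "(INF x\<in>S. enat (f x)) = enat k"
  shows "(\<forall>x\<in>S. k \<le> f x) \<and> (\<exists>x\<in>S. f x = k)"
proof
  show "\<forall>x\<in>S. k \<le> f x"
  proof
    fix x assume "x \<in> S"
    then have "(INF x\<in>S. enat (f x)) \<le> enat (f x)" by (rule INF_lower)
    then show "k \<le> f x" using assms by simp
  qed
next
  have ne: "S \<noteq> {}" using assms by (auto simp: top_enat_def)
  have "(INF x\<in>S. enat (f x)) \<in> (\<lambda>x. enat (f x)) ` S"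
    unfolding Inf_enat_def using ne by (auto intro: LeastI)
  then show "\<exists>x\<in>S. f x = k" using assms by auto
qed

context dbl begin

abbreviation "isoSp F \<equiv> card {s\<in>{X1,X2,Y1,Y2}. deg_in en F s = 0}"

lemma exc_ge: "F \<subseteq> E' \<Longrightarrow> excess V ends (Fb F True) + excess V ends (Fb F False) + isoSp F \<le> excess V' en F"
  using circ_ge[of F] iso_split[of F] unfolding excess_def by simp

lemma exc_ge1:
  assumes FE: "F \<subseteq> E'" and K: "K \<in> circs V' en F" and s: "X1 \<in> K \<or> X2 \<in> K \<or> Y1 \<in> K \<or> Y2 \<in> K"
  shows "excess V ends (Fb F True) + excess V ends (Fb F False) + 2 + isoSp F \<le> excess V' en F"
  using circ_ge1[OF assms] iso_split[OF FE] unfolding excess_def by simp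

lemma fadj_sp: "F \<subseteq> E' \<Longrightarrow> e \<in> F \<Longrightarrow> e \<in> {EX1Y1, EY1Y2, EY2X2} \<Longrightarrow> en e = {#u, w#} \<Longrightarrow> (u, w) \<in> fadj en F"
proof -
  assume a: "F \<subseteq> E'" "e \<in> F" "e \<in> {EX1Y1, EY1Y2, EY2X2}" "en e = {#u, w#}"
  then have "\<not> dangling en e" unfolding dangling_def by auto
  then show ?thesis unfolding fadj_def using a by blast
qed

lemma X1_circ:
  assumes FE: "F \<subseteq> E'" and d: "deg_in en F X1 \<noteq> 0"
    and nd: "\<And>e. e \<in> F \<Longrightarrow> dangling en e \<Longrightarrow> \<not> set_mset (en e) \<subseteq> {w. (X1, w) \<in> (fadj en F)\<^sup>*}"
  shows "{w. (X1, w) \<in> (fadj en F)\<^sup>*} \<in> circs V' en F"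
  unfolding circs_def fcomps_def using d nd by auto

lemma Y_closed:
  assumes FE: "F \<subseteq> E'" and n1: "EX1Y1 \<notin> F" and n2: "EY2X2 \<notin> F"
    and "(y, w) \<in> (fadj en F)\<^sup>*" and "y \<in> {Y1, Y2}"
  shows "w \<in> {Y1, Y2}"
  using assms(4,5)
proof (induction rule: rtrancl_induct)
  case base then show ?case by simp
next
  case (step p z)
  obtain e' where e': "e' \<in> F" "\<not> dangling en e'" "en e' = {#p, z#}"
    using step(2) unfolding fadj_def by auto
  have e'E: "e' \<in> E'" using e'(1) FE by auto
  have inn: "p \<in># en e'" using e'(3) by simp
  have hp: "p \<in> {Y1, Y2}" using step by blast
  show ?case
  proof (cases e')
    case (CE c e)
    then show ?thesis using inn hp cnt_CE_Y1[of c e] cnt_CE_Y2[of c e]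
      by (auto simp del: dbl_ends.simps simp: count_eq_zero_iff)
  next
    case EY1Y2 then show ?thesis using e'(3) hp by (auto simp: add_mset_eq_single add_eq_conv_ex)
  qed (use e' n1 n2 inn hp in \<open>auto simp: dangling_def\<close>)
qed

end

context dbl begin

lemma fb_bound:
  assumes h0: "\<And>G. even_factor V E ends G \<Longrightarrow> (\<forall>e\<in>G. \<not> dangling ends e) \<Longrightarrow> a + 2 \<le> excess V ends G"
    and h2: "\<And>G. even_factor V E ends G \<Longrightarrow> card {e\<in>G. dangling ends e} = 2 \<Longrightarrow> a \<le> excess V ends G"
    and ef: "even_factor V' E' en F"
  shows "(if d1 \<in> Fb F b then a else a + 2) \<le> excess V ends (Fb F b)"
proof -
  have efb: "even_factor V E ends (Fb F b)" by (rule ef_Fb[OF ef])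
  have FE: "F \<subseteq> E'" using ef unfolding even_factor_def by auto
  have sub: "Fb F b \<subseteq> E" by (rule Fb_sub[OF FE])
  have pd: "d1 \<in> Fb F b \<longleftrightarrow> d2 \<in> Fb F b" by (rule par_d[OF efb])
  show ?thesis
  proof (cases "d1 \<in> Fb F b")
    case True
    then have "{e\<in>Fb F b. dangling ends e} = {d1, d2}" using dang_sub[OF sub] pd by auto
    then have "card {e\<in>Fb F b. dangling ends e} = 2" using d12 by simp
    then show ?thesis using h2[OF efb] True by simp
  next
    case False
    then have "\<forall>e\<in>Fb F b. \<not> dangling ends e" using dang_sub[OF sub] pd by auto
    then show ?thesis using h0[OF efb] False by simp
  qed
qed

lemma low0:
  assumes h0: "\<And>G. even_factor V E ends G \<Longrightarrow> (\<forall>e\<in>G. \<not> dangling ends e) \<Longrightarrow> a + 2 \<le> excess V ends G"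
    and h2: "\<And>G. even_factor V E ends G \<Longrightarrow> card {e\<in>G. dangling ends e} = 2 \<Longrightarrow> a \<le> excess V ends G"
    and ef: "even_factor V' E' en F" and nd: "\<forall>e\<in>F. \<not> dangling en e"
  shows "2 * a + 4 \<le> excess V' en F"
proof -
  have FE: "F \<subseteq> E'" using ef unfolding even_factor_def by auto
  have dX1: "deg_in en F X1 = 0 \<or> deg_in en F X1 = 2" using ef unfolding even_factor_def by simp
  have bT: "(if d1 \<in> Fb F True then a else a + 2) \<le> excess V ends (Fb F True)"
    by (rule fb_bound[OF h0 h2 ef])
  have bF: "(if d1 \<in> Fb F False then a else a + 2) \<le> excess V ends (Fb F False)"
    by (rule fb_bound[OF h0 h2 ef])
  show ?thesis
  proof (cases "deg_in en F X1 = 0")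
    case True
    then have "d1 \<notin> Fb F True" "d1 \<notin> Fb F False" using deg_X1[OF FE] by auto
    then show ?thesis using exc_ge[OF FE] bT bF by simp
  next
    case False
    let ?K = "{w. (X1, w) \<in> (fadj en F)\<^sup>*}"
    have K: "?K \<in> circs V' en F" using X1_circ[OF FE False] nd by blast
    have g: "excess V ends (Fb F True) + excess V ends (Fb F False) + 2 + isoSp F \<le> excess V' en F"
      by (rule exc_ge1[OF FE K]) simp
    have e: "of_bool (d1 \<in> Fb F True) + of_bool (d1 \<in> Fb F False) + of_bool (EX1Y1 \<in> F) = (2::nat)"
    proof -
      have "deg_in en F X1 = 2" using False dX1 by simp
      then show ?thesis unfolding deg_X1[OF FE] .
    qed
    show ?thesis
    proof (cases "EX1Y1 \<in> F")
      case True
      then have "(d1 \<in> Fb F True) \<noteq> (d1 \<in> Fb F False)" using e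
        by (cases "d1 \<in> Fb F True"; cases "d1 \<in> Fb F False"; simp)
      then show ?thesis using g bT bF by (cases "d1 \<in> Fb F True") simp_all
    next
      case False
      then have tf: "d1 \<in> Fb F True" "d1 \<in> Fb F False" using e
        by (cases "d1 \<in> Fb F True"; cases "d1 \<in> Fb F False"; simp)+
      have DY: "DY1 \<notin> F" "DY2 \<notin> F" using nd by (auto simp: dangling_def)
      have dY1: "deg_in en F Y1 = 0 \<or> deg_in en F Y1 = 2" using ef unfolding even_factor_def by simp
      have dY2: "deg_in en F Y2 = 0 \<or> deg_in en F Y2 = 2" using ef unfolding even_factor_def by simp
      have "EY1Y2 \<notin> F" using dY1 False DY unfolding deg_Y1[OF FE] by auto
      then have "deg_in en F Y1 = 0" "deg_in en F Y2 = 0"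
        using dY2 False DY unfolding deg_Y1[OF FE] deg_Y2[OF FE] by auto
      then have "{Y1, Y2} \<subseteq> {s\<in>{X1,X2,Y1,Y2}. deg_in en F s = 0}" by auto
      then have "card {Y1, Y2::'v dv} \<le> isoSp F" by (intro card_mono) auto
      then have "2 \<le> isoSp F" by simp
      then show ?thesis using g bT bF tf by simp
    qed
  qed
qed

lemma low2:
  assumes h0: "\<And>G. even_factor V E ends G \<Longrightarrow> (\<forall>e\<in>G. \<not> dangling ends e) \<Longrightarrow> a + 2 \<le> excess V ends G"
    and h2: "\<And>G. even_factor V E ends G \<Longrightarrow> card {e\<in>G. dangling ends e} = 2 \<Longrightarrow> a \<le> excess V ends G"
    and ef: "even_factor V' E' en F" and c2: "card {e\<in>F. dangling en e} = 2"
  shows "2 * a + 2 \<le> excess V' en F"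
proof -
  have FE: "F \<subseteq> E'" using ef unfolding even_factor_def by auto
  have "card (F \<inter> {DY1, DY2}) = 2" using c2 dang_F'[OF FE] by simp
  then have "F \<inter> {DY1, DY2} = {DY1, DY2}"
    by (intro card_subset_eq) auto
  then have D: "DY1 \<in> F" "DY2 \<in> F" by auto
  have dX1: "deg_in en F X1 = 0 \<or> deg_in en F X1 = 2" using ef unfolding even_factor_def by simp
  have dY1: "deg_in en F Y1 = 0 \<or> deg_in en F Y1 = 2" using ef unfolding even_factor_def by simp
  have dY2: "deg_in en F Y2 = 0 \<or> deg_in en F Y2 = 2" using ef unfolding even_factor_def by simp
  have bT: "(if d1 \<in> Fb F True then a else a + 2) \<le> excess V ends (Fb F True)"
    by (rule fb_bound[OF h0 h2 ef])
  have bF: "(if d1 \<in> Fb F False then a else a + 2) \<le> excess V ends (Fb F False)"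
    by (rule fb_bound[OF h0 h2 ef])
  have g0: "excess V ends (Fb F True) + excess V ends (Fb F False) + isoSp F \<le> excess V' en F"
    by (rule exc_ge[OF FE])
  show ?thesis
  proof (cases "EY1Y2 \<in> F")
    case True
    have n1: "EX1Y1 \<notin> F" using dY1 True D unfolding deg_Y1[OF FE] by auto
    have n2: "EY2X2 \<notin> F" using dY2 True D unfolding deg_Y2[OF FE] by auto
    have e: "of_bool (d1 \<in> Fb F True) + of_bool (d1 \<in> Fb F False) = (0::nat) \<or>
         of_bool (d1 \<in> Fb F True) + of_bool (d1 \<in> Fb F False) = (2::nat)"
      using dX1 n1 unfolding deg_X1[OF FE] by simp
    show ?thesis
    proof (cases "d1 \<in> Fb F True \<or> d1 \<in> Fb F False")
      case False
      then show ?thesis using g0 bT bF by simp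
    next
      case True
      have "d1 \<in> Fb F True \<and> d1 \<in> Fb F False" using e True
        by (cases "d1 \<in> Fb F True"; cases "d1 \<in> Fb F False") auto
      then have tf: "d1 \<in> Fb F True" "d1 \<in> Fb F False" by auto
      let ?K = "{w. (X1, w) \<in> (fadj en F)\<^sup>*}"
      have nY: "Y1 \<notin> ?K \<and> Y2 \<notin> ?K"
      proof (intro conjI notI)
        assume "Y1 \<in> ?K"
        then have "(X1, Y1) \<in> (fadj en F)\<^sup>*" by simp
        then have "(Y1, X1) \<in> (fadj en F)\<^sup>*" by (rule rt_sym)
        then have "X1 \<in> {Y1, Y2}" using Y_closed[OF FE n1 n2, of Y1 X1] by simp
        then show False by simp
      next
        assume "Y2 \<in> ?K"
        then have "(X1, Y2) \<in> (fadj en F)\<^sup>*" by simp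
        then have "(Y2, X1) \<in> (fadj en F)\<^sup>*" by (rule rt_sym)
        then have "X1 \<in> {Y1, Y2}" using Y_closed[OF FE n1 n2, of Y2 X1] by simp
        then show False by simp
      qed
      have dx: "deg_in en F X1 \<noteq> 0" using tf unfolding deg_X1[OF FE] by simp
      have K: "?K \<in> circs V' en F"
      proof (rule X1_circ[OF FE dx])
        fix e assume "e \<in> F" "dangling en e"
        moreover have "e \<in> E'" using \<open>e \<in> F\<close> FE by auto
        ultimately have "e = DY1 \<or> e = DY2" using dang_E' by simp
        then show "\<not> set_mset (en e) \<subseteq> ?K" using nY by auto
      qed
      have "excess V ends (Fb F True) + excess V ends (Fb F False) + 2 + isoSp F \<le> excess V' en F"
        by (rule exc_ge1[OF FE K]) simp
      then show ?thesis using bT bF tf by simp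
    qed
  next
    case False
    then have p: "EX1Y1 \<in> F" using dY1 D unfolding deg_Y1[OF FE] by (cases "EX1Y1 \<in> F") auto
    have e: "of_bool (d1 \<in> Fb F True) + of_bool (d1 \<in> Fb F False) = (1::nat)"
      using dX1 p unfolding deg_X1[OF FE] by simp
    then have "(d1 \<in> Fb F True) \<noteq> (d1 \<in> Fb F False)"
      by (cases "d1 \<in> Fb F True"; cases "d1 \<in> Fb F False"; simp)
    then show ?thesis using g0 bT bF by (cases "d1 \<in> Fb F True") simp_all
  qed
qed

end

lemma comp_eq: "(u, v) \<in> (fadj ends F)\<^sup>* \<Longrightarrow> {w. (u, w) \<in> (fadj ends F)\<^sup>*} = {w. (v, w) \<in> (fadj ends F)\<^sup>*}"
proof -
  assume uv: "(u, v) \<in> (fadj ends F)\<^sup>*"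
  then have vu: "(v, u) \<in> (fadj ends F)\<^sup>*" by (rule rt_sym)
  show ?thesis
  proof (intro set_eqI iffI; simp)
    fix w assume "(u, w) \<in> (fadj ends F)\<^sup>*" then show "(v, w) \<in> (fadj ends F)\<^sup>*"
      using vu by (rule rtrancl_trans[rotated])
  next
    fix w assume "(v, w) \<in> (fadj ends F)\<^sup>*" then show "(u, w) \<in> (fadj ends F)\<^sup>*"
      using uv by (rule rtrancl_trans[rotated])
  qed
qed

context dbl begin

lemma Fb_constr: "Fb (CE True ` G2 \<union> CE False ` G0 \<union> S) True = G2"
  "Fb (CE True ` G2 \<union> CE False ` G0 \<union> S) False = G0"
  if "S \<subseteq> SP" for S
  using that unfolding Fb_def SP_def by auto

lemma constr_ef:
  assumes efG2: "even_factor V E ends G2" and G2d: "d1 \<in> G2" "d2 \<in> G2"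
    and efG0: "even_factor V E ends G0" and nd0: "\<forall>e\<in>G0. \<not> dangling ends e"
    and S: "S \<subseteq> SP" and F: "F = CE True ` G2 \<union> CE False ` G0 \<union> S"
    and degs: "deg_in en F X1 = 2" "deg_in en F X2 = 2" "deg_in en F Y1 = 2" "deg_in en F Y2 = 2"
  shows "even_factor V' E' en F"
proof -
  have G2E: "G2 \<subseteq> E" and G0E: "G0 \<subseteq> E" using efG2 efG0 unfolding even_factor_def by auto
  have SE: "S \<subseteq> E'" using S unfolding SP_def by auto
  have "CE True ` G2 \<subseteq> E'" "CE False ` G0 \<subseteq> E'" using G2E G0E by auto
  then have FE: "F \<subseteq> E'" unfolding F using SE by (intro Un_least)
  have fb: "Fb F True = G2" "Fb F False = G0" unfolding F by (rule Fb_constr[OF S])+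
  show ?thesis unfolding even_factor_def
  proof (intro conjI ballI FE)
    fix v assume "v \<in> V'"
    then have "v \<in> CV True ` V \<or> v \<in> CV False ` V \<or> v = X1 \<or> v = X2 \<or> v = Y1 \<or> v = Y2"
      unfolding V'_eq by blast
    then consider (T) w where "v = CV True w" "w \<in> V" | (Fa) w where "v = CV False w" "w \<in> V"
      | "v = X1" | "v = X2" | "v = Y1" | "v = Y2" by blast
    then show "deg_in en F v = 0 \<or> deg_in en F v = 2"
    proof cases
      case T then show ?thesis using deg_CV[OF FE] fb efG2 unfolding even_factor_def by simp
    next
      case Fa then show ?thesis using deg_CV[OF FE] fb efG0 unfolding even_factor_def by simp
    qed (use degs in auto)
  qed
qed

lemma d_notin_G0: "\<forall>e\<in>G0. \<not> dangling ends e \<Longrightarrow> d1 \<notin> G0 \<and> d2 \<notin> G0"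
  using dd1 dd2 by auto

lemma up0:
  assumes efG2: "even_factor V E ends G2" and G2d: "d1 \<in> G2" "d2 \<in> G2"
    and efG0: "even_factor V E ends G0" and nd0: "\<forall>e\<in>G0. \<not> dangling ends e"
    and F: "F = CE True ` G2 \<union> CE False ` G0 \<union> {EX1Y1, EY1Y2, EY2X2}"
  shows "even_factor V' E' en F \<and> (\<forall>e\<in>F. \<not> dangling en e)
     \<and> excess V' en F \<le> excess V ends G2 + excess V ends G0 + 2"
proof -
  have S: "{EX1Y1, EY1Y2, EY2X2} \<subseteq> SP" unfolding SP_def by auto
  have G2E: "G2 \<subseteq> E" and G0E: "G0 \<subseteq> E" using efG2 efG0 unfolding even_factor_def by auto
  have SE: "{EX1Y1, EY1Y2, EY2X2} \<subseteq> E'" by simp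
  have "CE True ` G2 \<subseteq> E'" "CE False ` G0 \<subseteq> E'" using G2E G0E by auto
  then have FE: "F \<subseteq> E'" unfolding F using SE by (intro Un_least)
  have fb: "Fb F True = G2" "Fb F False = G0" unfolding F by (rule Fb_constr[OF S])+
  have n0: "d1 \<notin> G0" "d2 \<notin> G0" using d_notin_G0[OF nd0] by auto
  have inF: "EX1Y1 \<in> F" "EY1Y2 \<in> F" "EY2X2 \<in> F" "DY1 \<notin> F" "DY2 \<notin> F" using F by auto
  have degs: "deg_in en F X1 = 2" "deg_in en F X2 = 2" "deg_in en F Y1 = 2" "deg_in en F Y2 = 2"
    using deg_X1[OF FE] deg_X2[OF FE] deg_Y1[OF FE] deg_Y2[OF FE] fb G2d n0 inF by simp_all
  have ef: "even_factor V' E' en F" by (rule constr_ef[OF efG2 G2d efG0 nd0 S F degs])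
  have nd: "\<forall>e\<in>F. \<not> dangling en e"
  proof
    fix e assume "e \<in> F"
    moreover then have "e \<in> E'" using FE by auto
    ultimately show "\<not> dangling en e" using dang_E' inF by auto
  qed
  let ?K = "{w. (X1, w) \<in> (fadj en F)\<^sup>*}"
  have a1: "(X1, Y1) \<in> fadj en F" by (rule fadj_sp[OF FE inF(1)]) auto
  have a2: "(Y1, Y2) \<in> fadj en F" by (rule fadj_sp[OF FE inF(2)]) auto
  have a3: "(Y2, X2) \<in> fadj en F" by (rule fadj_sp[OF FE inF(3)]) auto
  have reach: "(X1, s) \<in> (fadj en F)\<^sup>*" if "s \<in> {X1, X2, Y1, Y2}" for s
  proof -
    have r1: "(X1, Y1) \<in> (fadj en F)\<^sup>*" using a1 by (rule r_into_rtrancl)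
    have r2: "(X1, Y2) \<in> (fadj en F)\<^sup>*" using r1 a2 by (rule rtrancl_into_rtrancl)
    have r3: "(X1, X2) \<in> (fadj en F)\<^sup>*" using r2 a3 by (rule rtrancl_into_rtrancl)
    show ?thesis using that r1 r2 r3 by auto
  qed
  have c: "num_circuits V' en F \<le> num_circuits V ends (Fb F True) + num_circuits V ends (Fb F False) + 1"
  proof (rule circ_le1[OF FE])
    fix C' assume C': "C' \<in> circs V' en F" and s: "X1 \<in> C' \<or> X2 \<in> C' \<or> Y1 \<in> C' \<or> Y2 \<in> C'"
    obtain u where u: "C' = {w. (u, w) \<in> (fadj en F)\<^sup>*}" using C' unfolding circs_def fcomps_def by auto
    obtain s0 where s0: "s0 \<in> {X1, X2, Y1, Y2}" "s0 \<in> C'" using s by auto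
    have "(u, s0) \<in> (fadj en F)\<^sup>*" using s0(2) u by simp
    moreover have "(s0, X1) \<in> (fadj en F)\<^sup>*" using reach[OF s0(1)] by (rule rt_sym)
    ultimately have "(u, X1) \<in> (fadj en F)\<^sup>*" by (rule rtrancl_trans)
    then show "C' = ?K" using u comp_eq[of u X1] by simp
  qed
  have "{s\<in>{X1,X2,Y1,Y2}. deg_in en F s = 0} = {}" using degs by auto
  then have z: "isoSp F = 0" by simp
  have ie: "num_isolated V' en F = num_isolated V ends G2 + num_isolated V ends G0"
    using iso_split[OF FE] unfolding fb z by simp
  then have "excess V' en F \<le> excess V ends G2 + excess V ends G0 + 2"
    using c ie unfolding excess_def fb by simp
  then show ?thesis using ef nd by simp
qed

lemma up2:
  assumes efG2: "even_factor V E ends G2" and G2d: "d1 \<in> G2" "d2 \<in> G2"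
    and efG0: "even_factor V E ends G0" and nd0: "\<forall>e\<in>G0. \<not> dangling ends e"
    and F: "F = CE True ` G2 \<union> CE False ` G0 \<union> {EX1Y1, EY2X2, DY1, DY2}"
  shows "even_factor V' E' en F \<and> card {e\<in>F. dangling en e} = 2
     \<and> excess V' en F \<le> excess V ends G2 + excess V ends G0"
proof -
  have S: "{EX1Y1, EY2X2, DY1, DY2} \<subseteq> SP" unfolding SP_def by auto
  have G2E: "G2 \<subseteq> E" and G0E: "G0 \<subseteq> E" using efG2 efG0 unfolding even_factor_def by auto
  have SE: "{EX1Y1, EY2X2, DY1, DY2} \<subseteq> E'" by simp
  have "CE True ` G2 \<subseteq> E'" "CE False ` G0 \<subseteq> E'" using G2E G0E by auto
  then have FE: "F \<subseteq> E'" unfolding F using SE by (intro Un_least)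
  have fb: "Fb F True = G2" "Fb F False = G0" unfolding F by (rule Fb_constr[OF S])+
  have n0: "d1 \<notin> G0" "d2 \<notin> G0" using d_notin_G0[OF nd0] by auto
  have inF: "EX1Y1 \<in> F" "EY2X2 \<in> F" "DY1 \<in> F" "DY2 \<in> F" "EY1Y2 \<notin> F" using F by auto
  have degs: "deg_in en F X1 = 2" "deg_in en F X2 = 2" "deg_in en F Y1 = 2" "deg_in en F Y2 = 2"
    using deg_X1[OF FE] deg_X2[OF FE] deg_Y1[OF FE] deg_Y2[OF FE] fb G2d n0 inF by simp_all
  have ef: "even_factor V' E' en F" by (rule constr_ef[OF efG2 G2d efG0 nd0 S F degs])
  have cd: "card {e\<in>F. dangling en e} = 2" using dang_F'[OF FE] inF by simp
  have a1: "(X1, Y1) \<in> fadj en F" by (rule fadj_sp[OF FE inF(1)]) auto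
  have a3: "(X2, Y2) \<in> fadj en F"
    by (rule fadj_sp[OF FE inF(2)]) (auto simp: add_mset_commute)
  have c: "num_circuits V' en F \<le> num_circuits V ends (Fb F True) + num_circuits V ends (Fb F False)"
  proof (rule circ_le0[OF FE])
    fix C' assume C': "C' \<in> circs V' en F"
    have fc: "C' \<in> fcomps V' en F" and nd: "\<not> (\<exists>e\<in>F. dangling en e \<and> set_mset (en e) \<subseteq> C')"
      using C' unfolding circs_def by auto
    have y1: "Y1 \<notin> C'" using nd inF(3) by (auto simp: dangling_def)
    have y2: "Y2 \<notin> C'" using nd inF(4) by (auto simp: dangling_def)
    have x1: "X1 \<notin> C'" using y1 fcomps_closed[OF fc, of X1 Y1] r_into_rtrancl[OF a1] by blast
    have x2: "X2 \<notin> C'" using y2 fcomps_closed[OF fc, of X2 Y2] r_into_rtrancl[OF a3] by blast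
    show "X1 \<notin> C' \<and> X2 \<notin> C' \<and> Y1 \<notin> C' \<and> Y2 \<notin> C'" using x1 x2 y1 y2 by simp
  qed
  have "{s\<in>{X1,X2,Y1,Y2}. deg_in en F s = 0} = {}" using degs by auto
  then have z: "isoSp F = 0" by simp
  have ie: "num_isolated V' en F = num_isolated V ends G2 + num_isolated V ends G0"
    using iso_split[OF FE] unfolding fb z by simp
  then have "excess V' en F \<le> excess V ends G2 + excess V ends G0"
    using c ie unfolding excess_def fb by simp
  then show ?thesis using ef cd by simp
qed

end

theorem lemma1:
  fixes V :: "'v set" and E :: "'e set" and ends :: "'e \<Rightarrow> 'v multiset"
    and d1 d2 :: 'e and a n :: nat
  assumes "is_pole 2 V E ends"
    and "d1 \<in> E" and "d2 \<in> E" and "d1 \<noteq> d2"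
    and "dangling ends d1" and "dangling ends d2"
    and "tpole V E ends = (enat (a + 2), enat a, n)"
  shows "tpole (dbl_V V) (dbl_E E) (dbl_ends ends d1 d2) = (enat (2 * a + 4), enat (2 * a + 2), 2 * n + 4)"
proof -
  interpret dbl V E ends d1 d2 using assms(1-6) by unfold_locales
  have q0A: "q0 V E ends = enat (a + 2)" and q2A: "q2 V E ends = enat a" and nA: "card V = n"
    using assms(7) unfolding tpole_def by auto
  from inf_enat_attain[OF q0A[unfolded q0_def]] obtain G0 where
    h0': "\<forall>G\<in>{F. even_factor V E ends F \<and> (\<forall>e\<in>F. \<not> dangling ends e)}. a + 2 \<le> excess V ends G"
    and G0: "even_factor V E ends G0" "\<forall>e\<in>G0. \<not> dangling ends e" "excess V ends G0 = a + 2" by auto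
  from inf_enat_attain[OF q2A[unfolded q2_def]] obtain G2 where
    h2': "\<forall>G\<in>{F. even_factor V E ends F \<and> card {e\<in>F. dangling ends e} = 2}. a \<le> excess V ends G"
    and G2: "even_factor V E ends G2" "card {e\<in>G2. dangling ends e} = 2" "excess V ends G2 = a" by auto
  have h0: "\<And>G. even_factor V E ends G \<Longrightarrow> (\<forall>e\<in>G. \<not> dangling ends e) \<Longrightarrow> a + 2 \<le> excess V ends G"
    using h0' by blast
  have h2: "\<And>G. even_factor V E ends G \<Longrightarrow> card {e\<in>G. dangling ends e} = 2 \<Longrightarrow> a \<le> excess V ends G"
    using h2' by blast
  have G2E: "G2 \<subseteq> E" using G2(1) unfolding even_factor_def by auto
  have "card (G2 \<inter> {d1, d2}) = 2" using G2(2) dang_sub[OF G2E] by simp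
  then have "G2 \<inter> {d1, d2} = {d1, d2}" using d12 by (intro card_subset_eq) auto
  then have G2d: "d1 \<in> G2" "d2 \<in> G2" by auto
  define F0 where "F0 = CE True ` G2 \<union> CE False ` G0 \<union> {EX1Y1, EY1Y2, EY2X2}"
  define F2 where "F2 = CE True ` G2 \<union> CE False ` G0 \<union> {EX1Y1, EY2X2, DY1, DY2}"
  have u0: "even_factor V' E' en F0 \<and> (\<forall>e\<in>F0. \<not> dangling en e)
     \<and> excess V' en F0 \<le> excess V ends G2 + excess V ends G0 + 2"
    by (rule up0[OF G2(1) G2d G0(1,2) F0_def])
  have u2: "even_factor V' E' en F2 \<and> card {e\<in>F2. dangling en e} = 2
     \<and> excess V' en F2 \<le> excess V ends G2 + excess V ends G0"
    by (rule up2[OF G2(1) G2d G0(1,2) F2_def])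
  have Q0: "q0 V' E' en = enat (2 * a + 4)"
    unfolding q0_def
  proof (rule antisym)
    have "(INF F\<in>{F. even_factor V' E' en F \<and> (\<forall>e\<in>F. \<not> dangling en e)}. enat (excess V' en F))
        \<le> enat (excess V' en F0)" by (rule INF_lower) (use u0 in simp)
    also have "\<dots> \<le> enat (2 * a + 4)"
    proof -
      have "excess V' en F0 \<le> 2 * a + 4" using u0 G0(3) G2(3) by linarith
      then show ?thesis by simp
    qed
    finally show "(INF F\<in>{F. even_factor V' E' en F \<and> (\<forall>e\<in>F. \<not> dangling en e)}. enat (excess V' en F))
        \<le> enat (2 * a + 4)" .
  next
    show "enat (2 * a + 4) \<le> (INF F\<in>{F. even_factor V' E' en F \<and> (\<forall>e\<in>F. \<not> dangling en e)}. enat (excess V' en F))"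
    proof (rule INF_greatest)
      fix F assume "F \<in> {F. even_factor V' E' en F \<and> (\<forall>e\<in>F. \<not> dangling en e)}"
      then have ef: "even_factor V' E' en F" and nd: "\<forall>e\<in>F. \<not> dangling en e" by auto
      have l: "2 * a + 4 \<le> excess V' en F" by (rule low0[OF h0 h2 ef nd])
      then show "enat (2 * a + 4) \<le> enat (excess V' en F)" by simp
    qed
  qed
  have Q2: "q2 V' E' en = enat (2 * a + 2)"
    unfolding q2_def
  proof (rule antisym)
    have "(INF F\<in>{F. even_factor V' E' en F \<and> card {e\<in>F. dangling en e} = 2}. enat (excess V' en F))
        \<le> enat (excess V' en F2)" by (rule INF_lower) (use u2 in simp)
    also have "\<dots> \<le> enat (2 * a + 2)"
    proof -
      have "excess V' en F2 \<le> 2 * a + 2" using u2 G0(3) G2(3) by linarith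
      then show ?thesis by simp
    qed
    finally show "(INF F\<in>{F. even_factor V' E' en F \<and> card {e\<in>F. dangling en e} = 2}. enat (excess V' en F))
        \<le> enat (2 * a + 2)" .
  next
    show "enat (2 * a + 2) \<le> (INF F\<in>{F. even_factor V' E' en F \<and> card {e\<in>F. dangling en e} = 2}. enat (excess V' en F))"
    proof (rule INF_greatest)
      fix F assume "F \<in> {F. even_factor V' E' en F \<and> card {e\<in>F. dangling en e} = 2}"
      then have ef: "even_factor V' E' en F" and nd: "card {e\<in>F. dangling en e} = 2" by auto
      have l: "2 * a + 2 \<le> excess V' en F" by (rule low2[OF h0 h2 ef nd])
      then show "enat (2 * a + 2) \<le> enat (excess V' en F)" by simp
    qed
  qed
  show ?thesis unfolding tpole_def using Q0 Q2 card_V' nA by simp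
qed


end
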